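(* Let $n\geq1$, $w=e^{2\pi i/n}$ and $F=(w^{ij}/\sqrt n)_{i,j=0}^{n-1}$. Let $\Phi$ be the map on $n\times n$ circulant complex matrices defined by $\Phi\big((x_{j-i})_{i,j}\big)=\big((Fx)_{j-i}\big)_{i,j}$, where $x=(x_0,\ldots,x_{n-1})^t$ is the first row. Then $\Phi$ restricts to a bijection from $C^{circ}_n(\infty)$ onto $C^{circ}_n(\infty)$, and this bijection maps $C^{circ}_n(2)$ onto $C^{circ,sa}_n(\infty)$. More precisely, for a circulant $H$: $H\in\sqrt n\,U(n)$ iff all entries of $\Phi(H)$ have modulus one, and $H\in\sqrt n\,O(n)$ (real orthogonal times $\sqrt n$) iff $\Phi(H)$ is self-adjoint with all entries of modulus one.
   Context: A complex Hadamard matrix of order $n$ is a matrix $H$ with $|H_{ij}|=1$ and $H/\sqrt n$ unitary. $C^{circ}_n(\infty)$ is the set of $n\times n$ circulant complex Hadamard matrices ($H_{ij}$ depends only on $j-i$ mod $n$); $C^{circ}_n(2)$ is the subset of those with entries in $\{\pm1\}$; $C^{circ,sa}_n(\infty)$ is the subset of self-adjoint (Hermitian) ones. *)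

theory Defs
  imports "HOL-Analysis.Analysis" "Jordan_Normal_Form.Schur_Decomposition"
begin

definition circulant_mat :: "nat \<Rightarrow> complex mat \<Rightarrow> bool" where
  "circulant_mat n H \<longleftrightarrow> H \<in> carrier_mat n n \<and>
     (\<forall>i<n. \<forall>j<n. H $$ (i, j) = H $$ (0, (j + n - i) mod n))"

definition circ_of :: "nat \<Rightarrow> (nat \<Rightarrow> complex) \<Rightarrow> complex mat" where
  "circ_of n x = mat n n (\<lambda>(i, j). x ((j + n - i) mod n))"

definition fourier_mat :: "nat \<Rightarrow> complex mat" where
  "fourier_mat n = mat n n (\<lambda>(i, j).
     exp (2 * of_real pi * \<i> / of_nat n) ^ (i * j) / complex_of_real (sqrt (real n)))"

definition Phi :: "nat \<Rightarrow> complex mat \<Rightarrow> complex mat" where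
  "Phi n H = circ_of n (\<lambda>k. (fourier_mat n *\<^sub>v row H 0) $ k)"

definition unimodular_entries :: "nat \<Rightarrow> complex mat \<Rightarrow> bool" where
  "unimodular_entries n H \<longleftrightarrow> (\<forall>i<n. \<forall>j<n. cmod (H $$ (i, j)) = 1)"

definition in_sqrt_n_U :: "nat \<Rightarrow> complex mat \<Rightarrow> bool" where
  "in_sqrt_n_U n H \<longleftrightarrow> H \<in> carrier_mat n n \<and>
     H * mat_adjoint H = of_nat n \<cdot>\<^sub>m 1\<^sub>m n \<and>
     mat_adjoint H * H = of_nat n \<cdot>\<^sub>m 1\<^sub>m n"

definition in_sqrt_n_O :: "nat \<Rightarrow> complex mat \<Rightarrow> bool" where
  "in_sqrt_n_O n H \<longleftrightarrow> H \<in> carrier_mat n n \<and>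
     (\<forall>i<n. \<forall>j<n. H $$ (i, j) \<in> \<real>) \<and>
     H * transpose_mat H = of_nat n \<cdot>\<^sub>m 1\<^sub>m n \<and>
     transpose_mat H * H = of_nat n \<cdot>\<^sub>m 1\<^sub>m n"

definition complex_hadamard :: "nat \<Rightarrow> complex mat \<Rightarrow> bool" where
  "complex_hadamard n H \<longleftrightarrow> H \<in> carrier_mat n n \<and> unimodular_entries n H \<and> in_sqrt_n_U n H"

definition self_adjoint_mat :: "complex mat \<Rightarrow> bool" where
  "self_adjoint_mat H \<longleftrightarrow> mat_adjoint H = H"

definition C_circ_inf :: "nat \<Rightarrow> complex mat set" where
  "C_circ_inf n = {H. circulant_mat n H \<and> complex_hadamard n H}"

definition C_circ_2 :: "nat \<Rightarrow> complex mat set" where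
  "C_circ_2 n = {H \<in> C_circ_inf n. \<forall>i<n. \<forall>j<n. H $$ (i, j) \<in> {1, -1}}"

definition C_circ_sa_inf :: "nat \<Rightarrow> complex mat set" where
  "C_circ_sa_inf n = {H \<in> C_circ_inf n. self_adjoint_mat H}"

end

theory Submission
  imports Defs
begin


definition ww :: "nat \<Rightarrow> complex" where
  "ww n = exp (2 * of_real pi * \<i> / of_nat n)"

lemma ww_pow: "ww n ^ a = exp (of_nat a * (2 * of_real pi * \<i> / of_nat n))"
  unfolding ww_def by (simp only: exp_of_nat_mult)

lemma ww_n: assumes "n \<ge> 1" shows "ww n ^ n = 1"
  using assms by (simp add: ww_pow)

lemma ww_norm: "cmod (ww n ^ a) = 1"
proof -
  have "ww n ^ a = exp (\<i> * complex_of_real (2*pi*a/n))" unfolding ww_pow by (simp add: mult_ac)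
  thus ?thesis by (simp only: norm_exp_i_times)
qed

lemma ww_mod: assumes "n \<ge> 1" shows "ww n ^ a = ww n ^ (a mod n)"
proof -
  have "ww n ^ a = ww n ^ (n*(a div n) + a mod n)" by simp
  also have "\<dots> = (ww n ^ n) ^ (a div n) * ww n ^ (a mod n)"
    by (simp only: power_add power_mult)
  finally have "ww n ^ a = (ww n ^ n) ^ (a div n) * ww n ^ (a mod n)" .
  thus ?thesis using ww_n[OF assms] by simp
qed

lemma ww_eq1: assumes "n \<ge> 1" shows "ww n ^ a = 1 \<longleftrightarrow> n dvd a"
proof -
  have "ww n ^ a = exp (complex_of_real 0 + \<i> * complex_of_real (2*pi*a/n))"
    unfolding ww_pow by (simp add: algebra_simps)
  hence "ww n ^ a = 1 \<longleftrightarrow> (\<exists>m::int. 2*pi*a/n = 2*pi*m)"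
    by (auto simp: exp_eq_1 mult_ac)
  also have "\<dots> \<longleftrightarrow> (\<exists>m::int. real a = real n * m)"
    using assms by (auto simp: field_simps)
  also have "\<dots> \<longleftrightarrow> n dvd a"
  proof
    assume "\<exists>m::int. real a = real n * m"
    then obtain m::int where "real a = real n * m" by blast
    hence "int a = int n * m" by (metis of_int_eq_iff of_int_mult of_int_of_nat_eq)
    thus "n dvd a" by (metis dvd_triv_left int_dvd_int_iff)
  next
    assume "n dvd a" then obtain k where "a = n*k" by blast
    thus "\<exists>m::int. real a = real n * m" by (intro exI[of _ "int k"]) simp
  qed
  finally show ?thesis .
qed

lemma ww_sum: assumes "n \<ge> 1"
  shows "(\<Sum>j<n. ww n ^ (j*a)) = (if n dvd a then of_nat n else 0)"
proof -
  have "(\<Sum>j<n. ww n ^ (j*a)) = (\<Sum>j<n. (ww n ^ a) ^ j)"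
    by (intro sum.cong refl) (simp add: power_mult[symmetric] mult.commute)
  also have "\<dots> = (if ww n ^ a = 1 then of_nat n else (1 - (ww n ^ a)^n)/(1 - ww n ^ a))"
    by (rule sum_gp_strict)
  also have "(ww n ^ a)^n = 1" using ww_n[OF assms] by (metis power_mult mult.commute power_one)
  finally show ?thesis using ww_eq1[OF assms] by simp
qed

lemma inv_uniq: assumes "(x::complex) * c = 1" "x * d = 1" shows "c = d"
proof -
  have "c = c * (x * d)" using assms(2) by simp
  also have "\<dots> = (x*c) * d" by (simp add: mult_ac)
  also have "\<dots> = d" using assms(1) by simp
  finally show ?thesis .
qed

lemma ww_cnj: assumes "n \<ge> 1" shows "cnj (ww n ^ a) = ww n ^ ((n - 1) * a)"
proof -
  have "ww n ^ a * cnj (ww n ^ a) = 1"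
    using ww_norm[of n a] by (metis complex_norm_square mult.commute of_real_1 power_one)
  moreover have "ww n ^ a * ww n ^ ((n - 1) * a) = 1"
  proof -
    have "ww n ^ a * ww n ^ ((n - 1) * a) = ww n ^ (n*a)"
      using assms by (simp add: power_add[symmetric] algebra_simps)
    thus ?thesis using ww_n[OF assms] by (simp add: power_mult)
  qed
  ultimately show ?thesis by (rule inv_uniq)
qed




lemma adj_carrier: "(A::complex mat) \<in> carrier_mat nr nc \<Longrightarrow> mat_adjoint A \<in> carrier_mat nc nr"
  unfolding mat_adjoint_def by auto

lemma adj_index: "(A::complex mat) \<in> carrier_mat nr nc \<Longrightarrow> i < nc \<Longrightarrow> j < nr \<Longrightarrow>
   mat_adjoint A $$ (i,j) = cnj (A $$ (j,i))"
  unfolding mat_adjoint_def by (simp add: mat_of_rows_index)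

lemma adj_mult: assumes A: "(A::complex mat) \<in> carrier_mat n m" and B: "B \<in> carrier_mat m k"
  shows "mat_adjoint (A * B) = mat_adjoint B * mat_adjoint A"
proof (rule eq_matI)
  have AB: "A * B \<in> carrier_mat n k" using A B by simp
  show "dim_row (mat_adjoint (A * B)) = dim_row (mat_adjoint B * mat_adjoint A)"
    using adj_carrier[OF AB] adj_carrier[OF B] by simp
  show "dim_col (mat_adjoint (A * B)) = dim_col (mat_adjoint B * mat_adjoint A)"
    using adj_carrier[OF AB] adj_carrier[OF A] by simp
  fix i j assume "i < dim_row (mat_adjoint B * mat_adjoint A)" "j < dim_col (mat_adjoint B * mat_adjoint A)"
  hence i: "i < k" and j: "j < n" using adj_carrier[OF B] adj_carrier[OF A] by auto
  have "mat_adjoint (A * B) $$ (i,j) = cnj ((A*B) $$ (j,i))" using adj_index[OF AB i j] .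
  also have "\<dots> = (\<Sum>l\<in>{0..<m}. cnj (A $$ (j,l)) * cnj (B $$ (l,i)))"
    using A B i j by (simp add: scalar_prod_def)
  also have "\<dots> = (mat_adjoint B * mat_adjoint A) $$ (i,j)"
    using A B i j adj_carrier[OF A] adj_carrier[OF B]
    by (simp add: scalar_prod_def adj_index[OF A] adj_index[OF B] mult.commute)
  finally show "mat_adjoint (A * B) $$ (i,j) = (mat_adjoint B * mat_adjoint A) $$ (i,j)" .
qed

lemma adj_adj: assumes A: "(A::complex mat) \<in> carrier_mat nr nc" shows "mat_adjoint (mat_adjoint A) = A"
  by (rule eq_matI) (use A adj_carrier[OF A] adj_carrier[OF adj_carrier[OF A]] in
     \<open>auto simp: adj_index[OF adj_carrier[OF A]] adj_index[OF A]\<close>)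




lemma conj_char:
  fixes F M :: "complex mat"
  assumes F: "F \<in> carrier_mat n n" and M: "M \<in> carrier_mat n n"
    and FF: "F * mat_adjoint F = 1\<^sub>m n" and FaF: "mat_adjoint F * F = 1\<^sub>m n"
  shows "F * M * mat_adjoint F = c \<cdot>\<^sub>m 1\<^sub>m n \<longleftrightarrow> M = c \<cdot>\<^sub>m 1\<^sub>m n"
proof
  have Fa: "mat_adjoint F \<in> carrier_mat n n" using adj_carrier[OF F] .
  assume h: "F * M * mat_adjoint F = c \<cdot>\<^sub>m 1\<^sub>m n"
  have "M = (mat_adjoint F * F) * M * (mat_adjoint F * F)" using M FaF by simp
  also have "\<dots> = mat_adjoint F * (F * M * mat_adjoint F) * F"
    using F M Fa by (simp add: assoc_mult_mat[of _ n n _ n _ n])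
  also have "\<dots> = mat_adjoint F * (c \<cdot>\<^sub>m 1\<^sub>m n) * F" using h by simp
  also have "\<dots> = c \<cdot>\<^sub>m (mat_adjoint F * F)"
    using mult_smult_distrib[OF Fa one_carrier_mat, of c] mult_smult_assoc_mat[OF Fa F, of c] Fa by simp
  finally show "M = c \<cdot>\<^sub>m 1\<^sub>m n" using FaF by simp
next
  have Fa: "mat_adjoint F \<in> carrier_mat n n" using adj_carrier[OF F] .
  assume "M = c \<cdot>\<^sub>m 1\<^sub>m n"
  hence "F * M * mat_adjoint F = c \<cdot>\<^sub>m (F * mat_adjoint F)"
    using mult_smult_distrib[OF F one_carrier_mat, of c] mult_smult_assoc_mat[OF F Fa, of c] F by simp
  thus "F * M * mat_adjoint F = c \<cdot>\<^sub>m 1\<^sub>m n" using FF by simp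
qed

lemma U_char:
  fixes F H D :: "complex mat"
  assumes F: "F \<in> carrier_mat n n" and H: "H \<in> carrier_mat n n" and D: "D \<in> carrier_mat n n"
    and FF: "F * mat_adjoint F = 1\<^sub>m n" and FaF: "mat_adjoint F * F = 1\<^sub>m n"
    and HF: "H * F = F * D" and DD: "D * mat_adjoint D = mat_adjoint D * D"
  shows "(H * mat_adjoint H = c \<cdot>\<^sub>m 1\<^sub>m n \<and> mat_adjoint H * H = c \<cdot>\<^sub>m 1\<^sub>m n)
     \<longleftrightarrow> D * mat_adjoint D = c \<cdot>\<^sub>m 1\<^sub>m n"
proof -
  have Fa: "mat_adjoint F \<in> carrier_mat n n" using adj_carrier[OF F] .
  have Da: "mat_adjoint D \<in> carrier_mat n n" using adj_carrier[OF D] .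
  have H1: "H = F * D * mat_adjoint F"
  proof -
    have "H = H * (F * mat_adjoint F)" using H FF by simp
    also have "\<dots> = (H * F) * mat_adjoint F" using H F Fa by simp
    finally show ?thesis using HF by simp
  qed
  have FD: "F * D \<in> carrier_mat n n" using F D by simp
  have H2: "mat_adjoint H = F * mat_adjoint D * mat_adjoint F"
    unfolding H1 adj_mult[OF FD Fa] adj_adj[OF F] adj_mult[OF F D]
    using F Fa Da by simp
  have E1: "H * mat_adjoint H = (F * D * mat_adjoint F) * (F * mat_adjoint D * mat_adjoint F)"
    unfolding H2 by (subst H1) (rule refl)
  have "H * mat_adjoint H = F * D * (mat_adjoint F * F) * mat_adjoint D * mat_adjoint F"
    unfolding E1 using F Fa D Da by (simp add: assoc_mult_mat[of _ n n _ n _ n])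
  hence P1: "H * mat_adjoint H = F * (D * mat_adjoint D) * mat_adjoint F"
    using FaF F Fa D Da by (simp add: assoc_mult_mat[of _ n n _ n _ n])
  have E2: "mat_adjoint H * H = (F * mat_adjoint D * mat_adjoint F) * (F * D * mat_adjoint F)"
    unfolding H2 by (subst H1) (rule refl)
  have "mat_adjoint H * H = F * mat_adjoint D * (mat_adjoint F * F) * D * mat_adjoint F"
    unfolding E2 using F Fa D Da by (simp add: assoc_mult_mat[of _ n n _ n _ n])
  hence P2: "mat_adjoint H * H = F * (D * mat_adjoint D) * mat_adjoint F"
    using FaF F Fa D Da DD by (simp add: assoc_mult_mat[of _ n n _ n _ n])
  have DDc: "D * mat_adjoint D \<in> carrier_mat n n" using D Da by simp
  show ?thesis unfolding P1 P2 using conj_char[OF F DDc FF FaF] by simp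
qed



lemma dvd1: assumes "(i::nat) < n" "l < n" shows "n dvd (i + (n-1)*l) \<longleftrightarrow> i = l"
proof -
  have h: "i + (n-1)*l + l = i + l*n" using assms by (cases n) (auto simp: algebra_simps)
  have "int (i + (n-1)*l) + int l = int i + int l * int n" using arg_cong[OF h, of int] by simp
  hence e: "int (i + (n-1)*l) = (int i - int l) + int l * int n" by linarith
  have "n dvd (i + (n-1)*l) \<longleftrightarrow> int n dvd (int i - int l)"
    by (simp only: int_dvd_int_iff[symmetric] e dvd_add_times_triv_right_iff)
  also have "\<dots> \<longleftrightarrow> i = l"
  proof
    assume d: "int n dvd (int i - int l)"
    show "i = l"
    proof (rule ccontr)
      assume "i \<noteq> l"
      hence "int i - int l \<noteq> 0" by simp
      from dvd_imp_le_int[OF this d] assms show False by simp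
    qed
  qed simp
  finally show ?thesis .
qed
lemma dvd2: assumes "(k::nat) < n" "p < n" shows "n dvd (k + p) \<longleftrightarrow> p = (n-k) mod n"
proof (cases "k = 0")
  case True
  thus ?thesis using assms by (auto dest: dvd_imp_le)
next
  case False
  hence m: "(n-k) mod n = n - k" using assms by simp
  show ?thesis unfolding m
  proof
    assume "n dvd k + p"
    then obtain c where c: "k + p = n * c" by blast
    have "c \<noteq> 0" proof assume "c = 0" thus False using c False by simp qed
    moreover have "c < 2"
    proof (rule ccontr)
      assume "\<not> c < 2" hence "2 \<le> c" by simp
      hence "n * 2 \<le> n * c" by (rule mult_le_mono2)
      thus False using c assms by linarith
    qed
    ultimately have "c = 1" by simp
    thus "p = n - k" using c by simp
  next
    assume "p = n - k" thus "n dvd k + p" using assms by simp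
  qed
qed
lemma rev1: "(i::nat) < n \<Longrightarrow> j < n \<Longrightarrow> (n - (i+n-j) mod n) mod n = (j+n-i) mod n"
proof (cases "i < j")
  case True
  assume "i < n" "j < n"
  thus ?thesis using True by (simp add: mod_if; arith)
next
  case False
  assume "i < n" "j < n"
  thus ?thesis using False by (simp add: mod_if; arith)
qed
lemma s1: assumes i: "(i::nat) < n" and m: "m < n" shows "((m+i) mod n + n - i) mod n = m"
proof (cases "m + i < n")
  case True
  hence "(m+i) mod n = m + i" by simp
  hence "(m+i) mod n + n - i = m + n" by simp
  thus ?thesis using m by simp
next
  case False
  hence "(m+i) mod n = m + i - n" using i m by (simp add: mod_if)
  hence "(m+i) mod n + n - i = m" using False by simp
  thus ?thesis using m by simp
qed
lemma s2: assumes i: "(i::nat) < n" and j: "j < n" shows "((j+n-i) mod n + i) mod n = j"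
proof -
  have "((j+n-i) mod n + i) mod n = (j+n-i+i) mod n" by (simp add: mod_add_left_eq)
  also have "j+n-i+i = j+n" using i by simp
  finally show ?thesis using j by simp
qed
lemma r2: assumes k: "(k::nat) < n" shows "(n - (n-k) mod n) mod n = k"
proof (cases "k = 0")
  case True thus ?thesis by simp
next
  case False
  hence "(n-k) mod n = n - k" using k by simp
  hence "n - (n-k) mod n = k" using k by simp
  thus ?thesis using k by simp
qed
lemma d3: assumes k: "(k::nat) < n" shows "n dvd (k + (n-k) mod n) * m"
proof (cases "k = 0")
  case True thus ?thesis by simp
next
  case False
  hence "(n-k) mod n = n - k" using k by simp
  hence "k + (n-k) mod n = n" using k by simp
  thus ?thesis by simp
qed

definition sq :: "nat \<Rightarrow> complex" where "sq n = complex_of_real (sqrt (real n))"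
definition lam :: "nat \<Rightarrow> (nat \<Rightarrow> complex) \<Rightarrow> nat \<Rightarrow> complex" where
  "lam n x k = (\<Sum>m<n. ww n ^ (k*m) * x m)"
definition dft :: "nat \<Rightarrow> (nat \<Rightarrow> complex) \<Rightarrow> nat \<Rightarrow> complex" where
  "dft n x k = lam n x k / sq n"
definition dg :: "nat \<Rightarrow> (nat \<Rightarrow> complex) \<Rightarrow> complex mat" where
  "dg n d = mat n n (\<lambda>(i,j). if i = j then d i else 0)"

lemma sq_sq: "sq n * sq n = of_nat n"
  unfolding sq_def by (simp flip: of_real_mult)

lemma sq_nz: "n \<ge> 1 \<Longrightarrow> sq n \<noteq> 0"
  unfolding sq_def by simp

lemma cnj_sq: "cnj (sq n) = sq n"
  unfolding sq_def by simp

lemma fourier_carrier: "fourier_mat n \<in> carrier_mat n n"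
  unfolding fourier_mat_def by simp

lemma fourier_idx: "i < n \<Longrightarrow> j < n \<Longrightarrow> fourier_mat n $$ (i,j) = ww n ^ (i*j) / sq n"
  unfolding fourier_mat_def ww_def sq_def by simp

lemma FF: assumes n: "n \<ge> 1" shows "fourier_mat n * mat_adjoint (fourier_mat n) = 1\<^sub>m n"
proof (rule eq_matI)
  have Fc: "fourier_mat n \<in> carrier_mat n n" by (rule fourier_carrier)
  have Fa: "mat_adjoint (fourier_mat n) \<in> carrier_mat n n" by (rule adj_carrier[OF Fc])
  show "dim_row (fourier_mat n * mat_adjoint (fourier_mat n)) = dim_row (1\<^sub>m n)" using Fc by simp
  show "dim_col (fourier_mat n * mat_adjoint (fourier_mat n)) = dim_col (1\<^sub>m n)" using Fa by simp
  fix i l assume "i < dim_row (1\<^sub>m n)" "l < dim_col (1\<^sub>m n)"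
  hence i: "i < n" and l: "l < n" by auto
  have "(fourier_mat n * mat_adjoint (fourier_mat n)) $$ (i,l)
      = (\<Sum>j\<in>{0..<n}. fourier_mat n $$ (i,j) * mat_adjoint (fourier_mat n) $$ (j,l))"
    using i l Fc Fa by (simp add: scalar_prod_def)
  also have "\<dots> = (\<Sum>j<n. ww n ^ (j * (i + (n-1)*l)) / of_nat n)"
  proof (rule sum.cong)
    show "{0..<n} = {..<n}" by auto
  next
    fix j assume "j \<in> {..<n}" hence j: "j < n" by simp
    have "fourier_mat n $$ (i,j) * mat_adjoint (fourier_mat n) $$ (j,l)
        = ww n ^ (i*j) / sq n * (cnj (ww n ^ (l*j)) / sq n)"
      using i j l by (simp add: adj_index[OF Fc] fourier_idx cnj_sq)
    also have "\<dots> = ww n ^ (i*j) * ww n ^ ((n-1)*(l*j)) / (sq n * sq n)"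
      by (subst ww_cnj[OF n]) simp
    also have "ww n ^ (i*j) * ww n ^ ((n-1)*(l*j)) = ww n ^ (j * (i + (n-1)*l))"
      by (simp add: power_add[symmetric] algebra_simps)
    finally show "fourier_mat n $$ (i,j) * mat_adjoint (fourier_mat n) $$ (j,l)
        = ww n ^ (j * (i + (n-1)*l)) / of_nat n" by (simp add: sq_sq)
  qed
  also have "\<dots> = (\<Sum>j<n. ww n ^ (j * (i + (n-1)*l))) / of_nat n"
    by (simp add: sum_divide_distrib)
  also have "\<dots> = (if i = l then 1 else 0)"
    using ww_sum[OF n] dvd1[OF i l] n by simp
  finally show "(fourier_mat n * mat_adjoint (fourier_mat n)) $$ (i,l) = 1\<^sub>m n $$ (i,l)"
    using i l by simp
qed

lemma FaF: assumes n: "n \<ge> 1" shows "mat_adjoint (fourier_mat n) * fourier_mat n = 1\<^sub>m n"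
  by (rule mat_mult_left_right_inverse[OF fourier_carrier adj_carrier[OF fourier_carrier] FF[OF n]])

lemma ww_mult_mod: assumes n: "n \<ge> 1" shows "ww n ^ (a * k) = ww n ^ ((a mod n) * k)"
proof -
  have "ww n ^ (a * k) = ww n ^ ((a * k) mod n)" by (rule ww_mod[OF n])
  also have "(a * k) mod n = ((a mod n) * k) mod n" by (simp add: mod_mult_left_eq)
  also have "ww n ^ \<dots> = ww n ^ ((a mod n) * k)" by (rule ww_mod[OF n, symmetric])
  finally show ?thesis .
qed

lemma shift_sum: assumes n: "n \<ge> 1" and i: "i < n"
  shows "(\<Sum>j<n. x ((j+n-i) mod n) * ww n ^ (j*k)) = ww n ^ (i*k) * lam n x k"
proof -
  define G where "G j = x ((j+n-i) mod n) * ww n ^ (j*k)" for j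
  have "ww n ^ (i*k) * lam n x k = (\<Sum>m<n. G ((m+i) mod n))"
    unfolding lam_def sum_distrib_left
  proof (rule sum.cong[OF refl])
    fix m assume "m \<in> {..<n}" hence m: "m < n" by simp
    have "ww n ^ (i*k) * (ww n ^ (k*m) * x m) = x m * ww n ^ ((m+i)*k)"
      by (simp add: power_add[symmetric] algebra_simps)
    also have "\<dots> = x m * ww n ^ (((m+i) mod n)*k)" using ww_mult_mod[OF n] by simp
    finally show "ww n ^ (i*k) * (ww n ^ (k*m) * x m) = G ((m+i) mod n)"
      unfolding G_def using s1[OF i m] by simp
  qed
  also have "\<dots> = (\<Sum>j<n. G j)"
    by (rule sum.reindex_bij_witness[where i="\<lambda>b. (b+n-i) mod n" and j="\<lambda>a. (a+i) mod n"])
       (use i n s1 s2 in auto)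
  finally show ?thesis unfolding G_def by simp
qed

lemma circ_carrier: "circ_of n x \<in> carrier_mat n n"
  unfolding circ_of_def by simp

lemma circ_idx: "i < n \<Longrightarrow> j < n \<Longrightarrow> circ_of n x $$ (i,j) = x ((j+n-i) mod n)"
  unfolding circ_of_def by simp

lemma dg_carrier: "dg n d \<in> carrier_mat n n"
  unfolding dg_def by simp

lemma HF: assumes n: "n \<ge> 1"
  shows "circ_of n x * fourier_mat n = fourier_mat n * dg n (lam n x)"
proof (rule eq_matI)
  have Fc: "fourier_mat n \<in> carrier_mat n n" by (rule fourier_carrier)
  show "dim_row (circ_of n x * fourier_mat n) = dim_row (fourier_mat n * dg n (lam n x))"
    using Fc circ_carrier[of n x] by simp
  show "dim_col (circ_of n x * fourier_mat n) = dim_col (fourier_mat n * dg n (lam n x))"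
    using Fc dg_carrier[of n "lam n x"] by simp
  fix i k assume "i < dim_row (fourier_mat n * dg n (lam n x))" "k < dim_col (fourier_mat n * dg n (lam n x))"
  hence i: "i < n" and k: "k < n" using Fc dg_carrier[of n "lam n x"] by auto
  have "(circ_of n x * fourier_mat n) $$ (i,k) = (\<Sum>j\<in>{0..<n}. circ_of n x $$ (i,j) * fourier_mat n $$ (j,k))"
    using i k Fc circ_carrier[of n x] by (simp add: scalar_prod_def)
  also have "\<dots> = (\<Sum>j<n. x ((j+n-i) mod n) * ww n ^ (j*k)) / sq n"
    unfolding sum_divide_distrib by (rule sum.cong) (use i k in \<open>auto simp: circ_idx fourier_idx\<close>)
  also have "\<dots> = ww n ^ (i*k) * lam n x k / sq n" using shift_sum[OF n i] by simp
  also have "\<dots> = (\<Sum>j\<in>{0..<n}. fourier_mat n $$ (i,j) * dg n (lam n x) $$ (j,k))"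
  proof -
    have "(\<Sum>j\<in>{0..<n}. fourier_mat n $$ (i,j) * dg n (lam n x) $$ (j,k))
        = (\<Sum>j\<in>{0..<n}. if j = k then fourier_mat n $$ (i,k) * lam n x k else 0)"
      by (rule sum.cong) (use i k in \<open>auto simp: dg_def\<close>)
    also have "\<dots> = fourier_mat n $$ (i,k) * lam n x k" using k by simp
    finally show ?thesis using i k by (simp add: fourier_idx)
  qed
  also have "\<dots> = (fourier_mat n * dg n (lam n x)) $$ (i,k)"
    using i k Fc dg_carrier[of n "lam n x"] by (simp add: scalar_prod_def)
  finally show "(circ_of n x * fourier_mat n) $$ (i,k) = (fourier_mat n * dg n (lam n x)) $$ (i,k)" .
qed

lemma dg_adj: "dg n d * mat_adjoint (dg n d) = dg n (\<lambda>i. d i * cnj (d i))"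
  "mat_adjoint (dg n d) * dg n d = dg n (\<lambda>i. d i * cnj (d i))"
proof -
  have D: "dg n d \<in> carrier_mat n n" by (rule dg_carrier)
  have Da: "mat_adjoint (dg n d) \<in> carrier_mat n n" by (rule adj_carrier[OF D])
  show "dg n d * mat_adjoint (dg n d) = dg n (\<lambda>i. d i * cnj (d i))"
  proof (rule eq_matI)
    fix i j assume "i < dim_row (dg n (\<lambda>i. d i * cnj (d i)))" "j < dim_col (dg n (\<lambda>i. d i * cnj (d i)))"
    hence i: "i < n" and j: "j < n" by (auto simp: dg_def)
    have "(dg n d * mat_adjoint (dg n d)) $$ (i,j) = (\<Sum>l\<in>{0..<n}. dg n d $$ (i,l) * cnj (dg n d $$ (j,l)))"
      using i j D Da by (simp add: scalar_prod_def adj_index[OF D])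
    also have "\<dots> = (\<Sum>l\<in>{0..<n}. if l = i then (if i = j then d i * cnj (d i) else 0) else 0)"
      by (rule sum.cong) (use i j in \<open>auto simp: dg_def\<close>)
    also have "\<dots> = dg n (\<lambda>i. d i * cnj (d i)) $$ (i,j)" using i j by (simp add: dg_def)
    finally show "(dg n d * mat_adjoint (dg n d)) $$ (i,j) = dg n (\<lambda>i. d i * cnj (d i)) $$ (i,j)" .
  qed (use D Da in \<open>auto simp: dg_def\<close>)
  show "mat_adjoint (dg n d) * dg n d = dg n (\<lambda>i. d i * cnj (d i))"
  proof (rule eq_matI)
    fix i j assume "i < dim_row (dg n (\<lambda>i. d i * cnj (d i)))" "j < dim_col (dg n (\<lambda>i. d i * cnj (d i)))"
    hence i: "i < n" and j: "j < n" by (auto simp: dg_def)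
    have "(mat_adjoint (dg n d) * dg n d) $$ (i,j) = (\<Sum>l\<in>{0..<n}. cnj (dg n d $$ (l,i)) * dg n d $$ (l,j))"
      using i j D Da by (simp add: scalar_prod_def adj_index[OF D])
    also have "\<dots> = (\<Sum>l\<in>{0..<n}. if l = i then (if i = j then d i * cnj (d i) else 0) else 0)"
      by (rule sum.cong) (use i j in \<open>auto simp: dg_def\<close>)
    also have "\<dots> = dg n (\<lambda>i. d i * cnj (d i)) $$ (i,j)" using i j by (simp add: dg_def)
    finally show "(mat_adjoint (dg n d) * dg n d) $$ (i,j) = dg n (\<lambda>i. d i * cnj (d i)) $$ (i,j)" .
  qed (use D Da in \<open>auto simp: dg_def\<close>)
qed

lemma dg_eq_smult: "dg n f = c \<cdot>\<^sub>m 1\<^sub>m n \<longleftrightarrow> (\<forall>i<n. f i = c)"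
proof
  assume h: "dg n f = c \<cdot>\<^sub>m 1\<^sub>m n"
  show "\<forall>i<n. f i = c"
  proof (intro allI impI)
    fix i assume i: "i < n"
    have "dg n f $$ (i,i) = (c \<cdot>\<^sub>m 1\<^sub>m n) $$ (i,i)" using h by simp
    thus "f i = c" using i by (simp add: dg_def)
  qed
next
  assume "\<forall>i<n. f i = c"
  thus "dg n f = c \<cdot>\<^sub>m 1\<^sub>m n" by (intro eq_matI) (auto simp: dg_def)
qed

lemma U_circ: assumes n: "n \<ge> 1"
  shows "in_sqrt_n_U n (circ_of n x) \<longleftrightarrow> (\<forall>k<n. lam n x k * cnj (lam n x k) = of_nat n)"
proof -
  have "in_sqrt_n_U n (circ_of n x) \<longleftrightarrow>
     (circ_of n x * mat_adjoint (circ_of n x) = of_nat n \<cdot>\<^sub>m 1\<^sub>m n \<and>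
      mat_adjoint (circ_of n x) * circ_of n x = of_nat n \<cdot>\<^sub>m 1\<^sub>m n)"
    unfolding in_sqrt_n_U_def using circ_carrier by simp
  also have "\<dots> \<longleftrightarrow> dg n (lam n x) * mat_adjoint (dg n (lam n x)) = of_nat n \<cdot>\<^sub>m 1\<^sub>m n"
    by (rule U_char[OF fourier_carrier circ_carrier dg_carrier FF[OF n] FaF[OF n] HF[OF n]])
       (simp add: dg_adj)
  also have "\<dots> \<longleftrightarrow> (\<forall>k<n. lam n x k * cnj (lam n x k) = of_nat n)"
    unfolding dg_adj dg_eq_smult ..
  finally show ?thesis .
qed




definition r0 :: "complex mat \<Rightarrow> nat \<Rightarrow> complex" where "r0 H m = H $$ (0, m)"

lemma circ_eq: assumes "circulant_mat n H" shows "H = circ_of n (r0 H)"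
proof -
  have H: "H \<in> carrier_mat n n" and h: "\<And>i j. i < n \<Longrightarrow> j < n \<Longrightarrow> H $$ (i, j) = H $$ (0, (j + n - i) mod n)"
    using assms unfolding circulant_mat_def by blast+
  show ?thesis
  proof (rule eq_matI)
    fix i j assume "i < dim_row (circ_of n (r0 H))" "j < dim_col (circ_of n (r0 H))"
    hence i: "i < n" and j: "j < n" using circ_carrier[of n "r0 H"] by auto
    show "H $$ (i,j) = circ_of n (r0 H) $$ (i,j)"
      unfolding circ_idx[OF i j] r0_def by (rule h[OF i j])
  qed (use H circ_carrier[of n "r0 H"] in auto)
qed

lemma circ_circulant: assumes n: "n \<ge> 1" shows "circulant_mat n (circ_of n y)"
  unfolding circulant_mat_def using n by (auto simp: circ_idx circ_carrier)

lemma r0_circ: "m < n \<Longrightarrow> r0 (circ_of n y) m = y m"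
  unfolding r0_def by (simp add: circ_idx)

lemma circ_cong: "(\<And>k. k < n \<Longrightarrow> x k = y k) \<Longrightarrow> circ_of n x = circ_of n y"
  by (rule eq_matI) (auto simp: circ_of_def)

lemma dft_cong: "(\<And>m. m < n \<Longrightarrow> x m = y m) \<Longrightarrow> dft n x k = dft n y k"
  unfolding dft_def lam_def by simp

lemma Phi_circ: assumes n: "n \<ge> 1" shows "Phi n (circ_of n y) = circ_of n (dft n y)"
  unfolding Phi_def
proof (rule circ_cong)
  fix k assume k: "k < n"
  have Fc: "fourier_mat n \<in> carrier_mat n n" by (rule fourier_carrier)
  have C: "circ_of n y \<in> carrier_mat n n" by (rule circ_carrier)
  have "(fourier_mat n *\<^sub>v row (circ_of n y) 0) $ k = (\<Sum>j\<in>{0..<n}. fourier_mat n $$ (k,j) * circ_of n y $$ (0,j))"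
    using k Fc C n by (simp add: scalar_prod_def)
  also have "\<dots> = dft n y k"
    unfolding dft_def lam_def sum_divide_distrib
    by (rule sum.cong) (use k n in \<open>auto simp: fourier_idx circ_idx\<close>)
  finally show "(fourier_mat n *\<^sub>v row (circ_of n y) 0) $ k = dft n y k" .
qed


lemma DD: assumes n: "n \<ge> 1" and k: "k < n" shows "dft n (dft n x) k = x ((n-k) mod n)"
proof -
  have "dft n (dft n x) k = (\<Sum>m<n. ww n ^ (k*m) * ((\<Sum>p<n. ww n ^ (m*p) * x p) / sq n)) / sq n"
    unfolding dft_def lam_def ..
  also have "(\<Sum>m<n. ww n ^ (k*m) * ((\<Sum>p<n. ww n ^ (m*p) * x p) / sq n))
      = (\<Sum>m<n. \<Sum>p<n. x p * ww n ^ (m*(k+p)) / sq n)"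
    by (simp add: sum_distrib_left sum_divide_distrib power_add[symmetric] algebra_simps)
  also have "\<dots> = (\<Sum>p<n. \<Sum>m<n. x p * ww n ^ (m*(k+p)) / sq n)" by (rule sum.swap)
  also have "\<dots> = (\<Sum>p<n. x p * (\<Sum>m<n. ww n ^ (m*(k+p))) / sq n)"
    by (simp add: sum_distrib_left sum_divide_distrib)
  also have "\<dots> = (\<Sum>p<n. if p = (n-k) mod n then x p * of_nat n / sq n else 0)"
    by (rule sum.cong[OF refl]) (use ww_sum[OF n] dvd2[OF k] in auto)
  also have "\<dots> = x ((n-k) mod n) * of_nat n / sq n"
    using n by simp
  finally have "dft n (dft n x) k = x ((n-k) mod n) * of_nat n / (sq n * sq n)" by simp
  thus ?thesis using sq_sq[of n] n by simp
qed

lemma dft_inj: assumes n: "n \<ge> 1" and h: "\<And>k. k < n \<Longrightarrow> dft n x k = dft n y k" and m: "m < n"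
  shows "x m = y m"
proof -
  have mm: "(n-m) mod n < n" using n by simp
  have "x m = x ((n - (n-m) mod n) mod n)" using r2[OF m] by simp
  also have "\<dots> = dft n (dft n x) ((n-m) mod n)" using DD[OF n mm] by simp
  also have "\<dots> = dft n (dft n y) ((n-m) mod n)" by (rule dft_cong) (use h in simp)
  also have "\<dots> = y ((n - (n-m) mod n) mod n)" using DD[OF n mm] by simp
  also have "\<dots> = y m" using r2[OF m] by simp
  finally show ?thesis .
qed

lemma lam_iff: assumes n: "n \<ge> 1"
  shows "lam n x k * cnj (lam n x k) = of_nat n \<longleftrightarrow> cmod (dft n x k) = 1"
proof -
  have sn: "sqrt (real n) > 0" using n by simp
  have "lam n x k * cnj (lam n x k) = of_nat n \<longleftrightarrow> complex_of_real ((cmod (lam n x k))^2) = complex_of_real (real n)"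
    by (simp only: complex_norm_square[symmetric] of_real_of_nat_eq)
  also have "\<dots> \<longleftrightarrow> (cmod (lam n x k))^2 = real n" by (simp only: of_real_eq_iff)
  also have "\<dots> \<longleftrightarrow> cmod (lam n x k) = sqrt (real n)"
  proof
    assume "(cmod (lam n x k))^2 = real n"
    thus "cmod (lam n x k) = sqrt (real n)" using real_sqrt_unique[of "cmod (lam n x k)"] by simp
  qed simp
  also have "\<dots> \<longleftrightarrow> cmod (lam n x k) / sqrt (real n) = 1" using sn by (auto simp: field_simps)
  also have "cmod (lam n x k) / sqrt (real n) = cmod (dft n x k)"
    unfolding dft_def sq_def by (simp add: norm_divide)
  finally show ?thesis .
qed

lemma unimod_circ: assumes n: "n \<ge> 1"
  shows "unimodular_entries n (circ_of n y) \<longleftrightarrow> (\<forall>k<n. cmod (y k) = 1)"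
proof
  assume "unimodular_entries n (circ_of n y)"
  hence h: "\<And>i j. i < n \<Longrightarrow> j < n \<Longrightarrow> cmod (y ((j+n-i) mod n)) = 1"
    unfolding unimodular_entries_def by (simp add: circ_idx)
  show "\<forall>k<n. cmod (y k) = 1"
  proof (intro allI impI)
    fix k assume k: "k < n"
    from h[of 0 k] k n show "cmod (y k) = 1" by simp
  qed
next
  assume "\<forall>k<n. cmod (y k) = 1"
  thus "unimodular_entries n (circ_of n y)"
    unfolding unimodular_entries_def using n by (simp add: circ_idx)
qed

lemma P1: assumes n: "n \<ge> 1"
  shows "in_sqrt_n_U n (circ_of n x) \<longleftrightarrow> (\<forall>k<n. cmod (dft n x k) = 1)"
  using U_circ[OF n] lam_iff[OF n] by simp

lemma P3: assumes n: "n \<ge> 1"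
  shows "unimodular_entries n (Phi n (circ_of n x)) \<longleftrightarrow> (\<forall>k<n. cmod (dft n x k) = 1)"
  unfolding Phi_circ[OF n] unimod_circ[OF n] ..

lemma P4: assumes n: "n \<ge> 1"
  shows "in_sqrt_n_O n (circ_of n x) \<longleftrightarrow> (\<forall>m<n. x m \<in> \<real>) \<and> in_sqrt_n_U n (circ_of n x)"
proof -
  have C: "circ_of n x \<in> carrier_mat n n" by (rule circ_carrier)
  have R: "(\<forall>i<n. \<forall>j<n. circ_of n x $$ (i,j) \<in> \<real>) \<longleftrightarrow> (\<forall>m<n. x m \<in> \<real>)"
  proof
    assume h: "\<forall>i<n. \<forall>j<n. circ_of n x $$ (i,j) \<in> \<real>"
    show "\<forall>m<n. x m \<in> \<real>"
    proof (intro allI impI)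
      fix m assume m: "m < n"
      from h m n have "circ_of n x $$ (0,m) \<in> \<real>" by auto
      thus "x m \<in> \<real>" using m by (simp add: circ_idx)
    qed
  next
    assume "\<forall>m<n. x m \<in> \<real>"
    thus "\<forall>i<n. \<forall>j<n. circ_of n x $$ (i,j) \<in> \<real>" using n by (simp add: circ_idx)
  qed
  have T: "transpose_mat (circ_of n x) = mat_adjoint (circ_of n x)" if r: "\<forall>m<n. x m \<in> \<real>"
  proof (rule eq_matI)
    fix i j assume "i < dim_row (mat_adjoint (circ_of n x))" "j < dim_col (mat_adjoint (circ_of n x))"
    hence i: "i < n" and j: "j < n" using adj_carrier[OF C] by auto
    have "circ_of n x $$ (j,i) \<in> \<real>" using R r i j by auto
    thus "transpose_mat (circ_of n x) $$ (i,j) = mat_adjoint (circ_of n x) $$ (i,j)"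
      using i j C by (simp add: adj_index[OF C] Reals_cnj_iff)
  qed (use adj_carrier[OF C] C in auto)
  show ?thesis
    unfolding in_sqrt_n_O_def in_sqrt_n_U_def R using T C by auto
qed

lemma P5: assumes n: "n \<ge> 1"
  shows "self_adjoint_mat (circ_of n y) \<longleftrightarrow> (\<forall>k<n. cnj (y k) = y ((n-k) mod n))"
proof -
  have C: "circ_of n y \<in> carrier_mat n n" by (rule circ_carrier)
  have "self_adjoint_mat (circ_of n y) \<longleftrightarrow> (\<forall>i<n. \<forall>j<n. cnj (y ((i+n-j) mod n)) = y ((j+n-i) mod n))"
    unfolding self_adjoint_mat_def
  proof
    assume h: "mat_adjoint (circ_of n y) = circ_of n y"
    show "\<forall>i<n. \<forall>j<n. cnj (y ((i+n-j) mod n)) = y ((j+n-i) mod n)"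
    proof (intro allI impI)
      fix i j assume i: "i < n" and j: "j < n"
      have "mat_adjoint (circ_of n y) $$ (i,j) = circ_of n y $$ (i,j)" using h by simp
      thus "cnj (y ((i+n-j) mod n)) = y ((j+n-i) mod n)" using i j by (simp add: adj_index[OF C] circ_idx)
    qed
  next
    assume h: "\<forall>i<n. \<forall>j<n. cnj (y ((i+n-j) mod n)) = y ((j+n-i) mod n)"
    show "mat_adjoint (circ_of n y) = circ_of n y"
      by (rule eq_matI) (use h adj_carrier[OF C] C in \<open>auto simp: adj_index[OF C] circ_idx\<close>)
  qed
  also have "\<dots> \<longleftrightarrow> (\<forall>k<n. cnj (y k) = y ((n-k) mod n))"
  proof
    assume h: "\<forall>i<n. \<forall>j<n. cnj (y ((i+n-j) mod n)) = y ((j+n-i) mod n)"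
    show "\<forall>k<n. cnj (y k) = y ((n-k) mod n)"
    proof (intro allI impI)
      fix k assume k: "k < n"
      have "cnj (y ((k+n-0) mod n)) = y ((0+n-k) mod n)" by (rule h[rule_format]) (use k n in auto)
      thus "cnj (y k) = y ((n-k) mod n)" using k by simp
    qed
  next
    assume h: "\<forall>k<n. cnj (y k) = y ((n-k) mod n)"
    show "\<forall>i<n. \<forall>j<n. cnj (y ((i+n-j) mod n)) = y ((j+n-i) mod n)"
    proof (intro allI impI)
      fix i j assume i: "i < n" and j: "j < n"
      have "(i+n-j) mod n < n" using n by simp
      hence "cnj (y ((i+n-j) mod n)) = y ((n - (i+n-j) mod n) mod n)" using h by simp
      thus "cnj (y ((i+n-j) mod n)) = y ((j+n-i) mod n)" using rev1[OF i j] by simp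
    qed
  qed
  finally show ?thesis .
qed

lemma ww_cnj2: assumes n: "n \<ge> 1" and k: "k < n"
  shows "cnj (ww n ^ (k*m)) = ww n ^ (((n-k) mod n) * m)"
proof (rule inv_uniq)
  show "ww n ^ (k*m) * cnj (ww n ^ (k*m)) = 1"
    using ww_norm[of n "k*m"] complex_norm_square[of "ww n ^ (k*m)"] by simp
  have "ww n ^ (k*m) * ww n ^ (((n-k) mod n) * m) = ww n ^ ((k + (n-k) mod n) * m)"
    by (simp add: power_add[symmetric] algebra_simps)
  also have "\<dots> = 1" using ww_eq1[OF n] d3[OF k] by simp
  finally show "ww n ^ (k*m) * ww n ^ (((n-k) mod n) * m) = 1" .
qed

lemma cnj_dft: assumes n: "n \<ge> 1" and k: "k < n"
  shows "cnj (dft n x k) = dft n (\<lambda>m. cnj (x m)) ((n-k) mod n)"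
  unfolding dft_def lam_def using ww_cnj2[OF n k] by (simp add: cnj_sq)

lemma P6: assumes n: "n \<ge> 1"
  shows "(\<forall>k<n. cnj (dft n x k) = dft n x ((n-k) mod n)) \<longleftrightarrow> (\<forall>m<n. x m \<in> \<real>)"
proof -
  have "(\<forall>k<n. cnj (dft n x k) = dft n x ((n-k) mod n)) \<longleftrightarrow>
        (\<forall>k<n. dft n (\<lambda>m. cnj (x m)) ((n-k) mod n) = dft n x ((n-k) mod n))"
    using cnj_dft[OF n] by simp
  also have "\<dots> \<longleftrightarrow> (\<forall>k<n. dft n (\<lambda>m. cnj (x m)) k = dft n x k)"
  proof
    assume h: "\<forall>k<n. dft n (\<lambda>m. cnj (x m)) ((n-k) mod n) = dft n x ((n-k) mod n)"
    show "\<forall>k<n. dft n (\<lambda>m. cnj (x m)) k = dft n x k"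
    proof (intro allI impI)
      fix k assume k: "k < n"
      have "(n-k) mod n < n" using n by simp
      with h have "dft n (\<lambda>m. cnj (x m)) ((n - (n-k) mod n) mod n) = dft n x ((n - (n-k) mod n) mod n)" by simp
      thus "dft n (\<lambda>m. cnj (x m)) k = dft n x k" using r2[OF k] by simp
    qed
  next
    assume h: "\<forall>k<n. dft n (\<lambda>m. cnj (x m)) k = dft n x k"
    show "\<forall>k<n. dft n (\<lambda>m. cnj (x m)) ((n-k) mod n) = dft n x ((n-k) mod n)"
      using h n by simp
  qed
  also have "\<dots> \<longleftrightarrow> (\<forall>m<n. cnj (x m) = x m)"
  proof
    assume "\<forall>k<n. dft n (\<lambda>m. cnj (x m)) k = dft n x k"
    thus "\<forall>m<n. cnj (x m) = x m" using dft_inj[OF n, of "\<lambda>m. cnj (x m)" x] by blast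
  next
    assume "\<forall>m<n. cnj (x m) = x m"
    thus "\<forall>k<n. dft n (\<lambda>m. cnj (x m)) k = dft n x k" using dft_cong[of n "\<lambda>m. cnj (x m)" x] by blast
  qed
  also have "\<dots> \<longleftrightarrow> (\<forall>m<n. x m \<in> \<real>)" by (simp add: Reals_cnj_iff)
  finally show ?thesis .
qed




lemma memC: assumes n: "n \<ge> 1"
  shows "circ_of n x \<in> C_circ_inf n \<longleftrightarrow> (\<forall>m<n. cmod (x m) = 1) \<and> (\<forall>k<n. cmod (dft n x k) = 1)"
  unfolding C_circ_inf_def complex_hadamard_def
  using circ_circulant[OF n, of x] circ_carrier[of n x] unimod_circ[OF n, of x] P1[OF n, of x] by simp

lemma circ_ex: "circulant_mat n H \<Longrightarrow> \<exists>x. H = circ_of n x"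
  using circ_eq by blast

lemma PP: assumes n: "n \<ge> 1"
  shows "Phi n (Phi n (circ_of n x)) = circ_of n (\<lambda>k. x ((n-k) mod n))"
  unfolding Phi_circ[OF n] by (rule circ_cong) (rule DD[OF n])

lemma P4x: assumes n: "n \<ge> 1"
  shows "Phi n (Phi n (Phi n (Phi n (circ_of n x)))) = circ_of n x"
  unfolding PP[OF n] by (rule circ_cong) (simp add: r2)

lemma clos: assumes n: "n \<ge> 1" and h: "circ_of n x \<in> C_circ_inf n"
  shows "Phi n (circ_of n x) \<in> C_circ_inf n"
proof -
  from h have a: "\<forall>m<n. cmod (x m) = 1" and b: "\<forall>k<n. cmod (dft n x k) = 1"
    using memC[OF n] by auto
  have c: "\<forall>k<n. cmod (dft n (dft n x) k) = 1"
  proof (intro allI impI)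
    fix k assume k: "k < n"
    have "(n-k) mod n < n" using n by simp
    thus "cmod (dft n (dft n x) k) = 1" using a DD[OF n k] by simp
  qed
  show ?thesis unfolding Phi_circ[OF n] memC[OF n] using b c by simp
qed

lemma real_unit: assumes "(z::complex) \<in> \<real>" "cmod z = 1" shows "z \<in> {1, -1}"
proof -
  from assms(1) obtain r where r: "z = complex_of_real r" by (auto elim: Reals_cases)
  with assms(2) have "\<bar>r\<bar> = 1" by simp
  hence "r = 1 \<or> r = -1" by linarith
  thus ?thesis using r by auto
qed

theorem theorem3p2:
  fixes n :: nat
  assumes "n \<ge> 1"
  shows "bij_betw (Phi n) (C_circ_inf n) (C_circ_inf n)
    \<and> Phi n ` C_circ_2 n = C_circ_sa_inf n
    \<and> (\<forall>H. circulant_mat n H \<longrightarrow>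
          (in_sqrt_n_U n H \<longleftrightarrow> unimodular_entries n (Phi n H))
        \<and> (in_sqrt_n_O n H \<longleftrightarrow> self_adjoint_mat (Phi n H) \<and> unimodular_entries n (Phi n H)))"
proof -
  have n: "n \<ge> 1" using assms .
  have inC: "circulant_mat n H" if "H \<in> C_circ_inf n" for H
    using that unfolding C_circ_inf_def by simp
  have cl: "Phi n H \<in> C_circ_inf n" if h: "H \<in> C_circ_inf n" for H
  proof -
    obtain x where H: "H = circ_of n x" using circ_ex[OF inC[OF h]] by blast
    show ?thesis using clos[OF n] h unfolding H by simp
  qed
  have p4: "Phi n (Phi n (Phi n (Phi n H))) = H" if h: "H \<in> C_circ_inf n" for H
  proof -
    obtain x where H: "H = circ_of n x" using circ_ex[OF inC[OF h]] by blast
    show ?thesis unfolding H by (rule P4x[OF n])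
  qed
  have third: "\<forall>H. circulant_mat n H \<longrightarrow>
          (in_sqrt_n_U n H \<longleftrightarrow> unimodular_entries n (Phi n H))
        \<and> (in_sqrt_n_O n H \<longleftrightarrow> self_adjoint_mat (Phi n H) \<and> unimodular_entries n (Phi n H))"
  proof (intro allI impI)
    fix H assume "circulant_mat n H"
    then obtain x where H: "H = circ_of n x" using circ_ex by blast
    have U: "in_sqrt_n_U n H \<longleftrightarrow> unimodular_entries n (Phi n H)"
      unfolding H P1[OF n] P3[OF n] ..
    have SA: "self_adjoint_mat (Phi n H) \<longleftrightarrow> (\<forall>m<n. x m \<in> \<real>)"
      unfolding H Phi_circ[OF n] P5[OF n] P6[OF n] ..
    have O: "in_sqrt_n_O n H \<longleftrightarrow> (\<forall>m<n. x m \<in> \<real>) \<and> in_sqrt_n_U n H"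
      unfolding H by (rule P4[OF n])
    show "(in_sqrt_n_U n H \<longleftrightarrow> unimodular_entries n (Phi n H))
        \<and> (in_sqrt_n_O n H \<longleftrightarrow> self_adjoint_mat (Phi n H) \<and> unimodular_entries n (Phi n H))"
      using U SA O by blast
  qed
  have bij: "bij_betw (Phi n) (C_circ_inf n) (C_circ_inf n)"
    unfolding bij_betw_def
  proof
    show "inj_on (Phi n) (C_circ_inf n)"
    proof (rule inj_onI)
      fix H G assume H: "H \<in> C_circ_inf n" and G: "G \<in> C_circ_inf n" and e: "Phi n H = Phi n G"
      have "H = Phi n (Phi n (Phi n (Phi n H)))" using p4[OF H] by simp
      also have "\<dots> = Phi n (Phi n (Phi n (Phi n G)))" using e by simp
      also have "\<dots> = G" using p4[OF G] .
      finally show "H = G" .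
    qed
    show "Phi n ` C_circ_inf n = C_circ_inf n"
    proof
      show "Phi n ` C_circ_inf n \<subseteq> C_circ_inf n" using cl by blast
      show "C_circ_inf n \<subseteq> Phi n ` C_circ_inf n"
      proof
        fix G assume G: "G \<in> C_circ_inf n"
        have "Phi n (Phi n (Phi n G)) \<in> C_circ_inf n" using cl[OF cl[OF cl[OF G]]] .
        moreover have "G = Phi n (Phi n (Phi n (Phi n G)))" using p4[OF G] by simp
        ultimately show "G \<in> Phi n ` C_circ_inf n" by blast
      qed
    qed
  qed
  have img: "Phi n ` C_circ_2 n = C_circ_sa_inf n"
  proof
    show "Phi n ` C_circ_2 n \<subseteq> C_circ_sa_inf n"
    proof
      fix G assume "G \<in> Phi n ` C_circ_2 n"
      then obtain H where H2: "H \<in> C_circ_2 n" and G: "G = Phi n H" by blast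
      have HC: "H \<in> C_circ_inf n" and pm: "\<forall>i<n. \<forall>j<n. H $$ (i, j) \<in> {1, -1}"
        using H2 unfolding C_circ_2_def by auto
      obtain x where H: "H = circ_of n x" using circ_ex[OF inC[OF HC]] by blast
      have r: "\<forall>m<n. x m \<in> \<real>"
      proof (intro allI impI)
        fix m assume m: "m < n"
        have "H $$ (0, m) \<in> {1, -1}" using pm m n by auto
        hence "x m \<in> {1, -1}" unfolding H using m n by (simp add: circ_idx)
        thus "x m \<in> \<real>" by auto
      qed
      have "self_adjoint_mat (Phi n H)"
        unfolding H Phi_circ[OF n] P5[OF n] P6[OF n] using r .
      thus "G \<in> C_circ_sa_inf n" unfolding C_circ_sa_inf_def G using cl[OF HC] by simp
    qed
    show "C_circ_sa_inf n \<subseteq> Phi n ` C_circ_2 n"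
    proof
      fix G assume Gsa: "G \<in> C_circ_sa_inf n"
      hence GC: "G \<in> C_circ_inf n" and sa: "self_adjoint_mat G" unfolding C_circ_sa_inf_def by auto
      define H where "H = Phi n (Phi n (Phi n G))"
      have HC: "H \<in> C_circ_inf n" unfolding H_def using cl[OF cl[OF cl[OF GC]]] .
      have PH: "Phi n H = G" unfolding H_def using p4[OF GC] .
      obtain x where Hx: "H = circ_of n x" using circ_ex[OF inC[OF HC]] by blast
      have r: "\<forall>m<n. x m \<in> \<real>"
        using sa unfolding PH[symmetric] Hx Phi_circ[OF n] P5[OF n] P6[OF n] .
      have u: "\<forall>m<n. cmod (x m) = 1" using HC unfolding Hx memC[OF n] by simp
      have pm: "\<forall>i<n. \<forall>j<n. H $$ (i, j) \<in> {1, -1}"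
      proof (intro allI impI)
        fix i j assume i: "i < n" and j: "j < n"
        have "(j+n-i) mod n < n" using n by simp
        hence "x ((j+n-i) mod n) \<in> {1, -1}" using real_unit r u by blast
        thus "H $$ (i, j) \<in> {1, -1}" unfolding Hx using i j by (simp add: circ_idx)
      qed
      have "H \<in> C_circ_2 n" unfolding C_circ_2_def using HC pm by simp
      thus "G \<in> Phi n ` C_circ_2 n" using PH by blast
    qed
  qed
  show ?thesis using bij img third by blast
qed


end
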